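(* For every odd integer $n\ge 3$ and every positive divisor $\lambda$ of $n$, there exists a ${}^\lambda\mathrm{H}_{n/\lambda}(n;3)$.
   Context: For positive integers $m,n,s,k,\lambda,t$ with $t$ dividing $\frac{2nk}{\lambda}$, let $v=\frac{2nk}{\lambda}+t$ and $J$ the subgroup of $\mathbb{Z}_v$ of order $t$. A ${}^\lambda\mathrm{H}_t(m,n;s,k)$ is an $m\times n$ partially filled array with entries in $\mathbb{Z}_v$ such that: (a) each row has exactly $s$ and each column exactly $k$ filled cells; (b) the multiset $\{\pm x: x$ an entry of a filled cell$\}$ contains each element of $\mathbb{Z}_v\setminus J$ exactly $\lambda$ times and no element of $J$; (c) every row and every column sums to $0$ in $\mathbb{Z}_v$. When $m=n$ (so $s=k$) it is denoted ${}^\lambda\mathrm{H}_t(n;k)$. *)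

theory Defs
  imports Main "HOL-Library.Multiset"
begin

text \<open>Elements of Z_v are represented by integers in {0..<v}; the subgroup J of order t
  is the set of multiples of v div t.\<close>

definition filled_cells :: "nat \<Rightarrow> nat \<Rightarrow> (nat \<Rightarrow> nat \<Rightarrow> int option) \<Rightarrow> (nat \<times> nat) set" where
  "filled_cells m n A = {(i, j). i < m \<and> j < n \<and> A i j \<noteq> None}"

definition pm_multiset :: "int \<Rightarrow> nat \<Rightarrow> nat \<Rightarrow> (nat \<Rightarrow> nat \<Rightarrow> int option) \<Rightarrow> int multiset" where
  "pm_multiset v m n A =
     image_mset (\<lambda>(i, j). the (A i j) mod v) (mset_set (filled_cells m n A)) +
     image_mset (\<lambda>(i, j). (- the (A i j)) mod v) (mset_set (filled_cells m n A))"

definition heffter_array ::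
  "nat \<Rightarrow> nat \<Rightarrow> nat \<Rightarrow> nat \<Rightarrow> nat \<Rightarrow> nat \<Rightarrow> (nat \<Rightarrow> nat \<Rightarrow> int option) \<Rightarrow> bool" where
  "heffter_array lam t m n s k A \<longleftrightarrow>
     (let v = 2 * n * k div lam + t in
       0 < m \<and> 0 < n \<and> 0 < s \<and> 0 < k \<and> 0 < lam \<and> 0 < t \<and>
       lam dvd 2 * n * k \<and> t dvd (2 * n * k div lam) \<and>
       (\<forall>i j. A i j \<noteq> None \<longrightarrow> i < m \<and> j < n) \<and>
       (\<forall>i j x. A i j = Some x \<longrightarrow> 0 \<le> x \<and> x < int v) \<and>
       (\<forall>i<m. card {j. j < n \<and> A i j \<noteq> None} = s) \<and>
       (\<forall>j<n. card {i. i < m \<and> A i j \<noteq> None} = k) \<and>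
       (\<forall>x \<in> {0..<int v}.
          count (pm_multiset (int v) m n A) x =
            (if int (v div t) dvd x then 0 else lam)) \<and>
       (\<forall>i<m. (\<Sum>j \<in> {j. j < n \<and> A i j \<noteq> None}. the (A i j)) mod int v = 0) \<and>
       (\<forall>j<n. (\<Sum>i \<in> {i. i < m \<and> A i j \<noteq> None}. the (A i j)) mod int v = 0))"

end

theory Submission imports Defs "HOL-Number_Theory.Cong" begin

lemma card_mod_class:
  fixes d lam i0 :: nat
  assumes "i0 < d"
  shows "card {i. i < lam*d \<and> i mod d = i0} = lam"
proof -
  have "{i. i < lam*d \<and> i mod d = i0} = (\<lambda>k. i0 + d*k) ` {..<lam}"
  proof (intro set_eqI iffI)
    fix i assume "i \<in> {i. i < lam*d \<and> i mod d = i0}"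
    hence h: "i < lam*d" "i mod d = i0" by auto
    have "i = i0 + d * (i div d)" using h(2) by (metis add.commute mod_mult_div_eq)
    moreover have "i div d < lam" using h(1) by (metis div_less_iff_less_mult assms gr_implies_not0 less_nat_zero_code nat_neq_iff)
    ultimately show "i \<in> (\<lambda>k. i0 + d*k) ` {..<lam}" by blast
  next
    fix i assume "i \<in> (\<lambda>k. i0 + d*k) ` {..<lam}"
    then obtain k where k: "k < lam" "i = i0 + d*k" by auto
    have "i0 + d*k < d + d*k" using assms by simp
    also have "\<dots> = d * (k+1)" by simp
    also have "\<dots> \<le> d * lam" by (intro mult_le_mono2) (use k(1) in simp)
    finally have "i < lam * d" using k by (simp add: mult.commute)
    moreover have "i mod d = i0" using k assms by simp
    ultimately show "i \<in> {i. i < lam*d \<and> i mod d = i0}" by simp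
  qed
  moreover have "inj_on (\<lambda>k. i0 + d*k) {..<lam}" using assms by (auto simp: inj_on_def)
  ultimately show ?thesis by (simp add: card_image)
qed

lemma count_aff:
  fixes d lam :: nat and c m x :: int
  assumes "d > 0" "coprime m (int d)" "0 \<le> x" "x < 7*int d"
  shows "card {i. i < lam*d \<and> (c + 7*m*int i) mod (7*int d) = x} = (if x mod 7 = c mod 7 then lam else 0)"
proof (cases "x mod 7 = c mod 7")
  case False
  have "(c + 7*m*int i) mod (7*int d) \<noteq> x" for i
  proof
    assume "(c + 7*m*int i) mod (7*int d) = x"
    hence "(c + 7*m*int i) mod (7*int d) mod 7 = x mod 7" by simp
    hence "(c + 7*m*int i) mod 7 = x mod 7" by (simp add: mod_mod_cancel)
    moreover have "(c + 7*m*int i) mod 7 = c mod 7" by (simp add: mult.assoc)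
    ultimately show False using False by simp
  qed
  thus ?thesis using False by simp
next
  case True
  define y where "y = (x - c) div 7"
  have xy: "x - c = 7*y" unfolding y_def using True by (metis dvd_div_mult_self mod_eq_dvd_iff mult.commute)
  obtain u where u: "[m * u = 1] (mod int d)" using cong_solve_coprime_int[OF assms(2)] by blast
  define i0 where "i0 = nat ((u*y) mod int d)"
  have i0: "i0 < d" "int i0 = (u*y) mod int d" using assms(1) unfolding i0_def by (auto simp: nat_less_iff)
  have key: "(c + 7*m*int i) mod (7*int d) = x \<longleftrightarrow> i mod d = i0" for i
  proof -
    have "(c + 7*m*int i) mod (7*int d) = x \<longleftrightarrow> [c + 7*m*int i = x] (mod 7*int d)"
      using assms by (simp add: cong_def)
    also have "\<dots> \<longleftrightarrow> (7*int d) dvd (7*(y - m*int i))"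
    proof -
      have eq: "c + 7*m*int i - x = -(7*(y - m*int i))" using xy by (simp add: algebra_simps)
      show ?thesis by (simp only: cong_iff_dvd_diff eq dvd_minus_iff)
    qed
    also have "\<dots> \<longleftrightarrow> int d dvd (y - m*int i)" using dvd_mult_cancel_left[of "7::int" "int d" "y - m*int i"] by (simp add: right_diff_distrib)
    also have "\<dots> \<longleftrightarrow> [m*int i = y] (mod int d)" by (metis cong_iff_dvd_diff cong_sym)
    also have "\<dots> \<longleftrightarrow> [int i = u*y] (mod int d)"
    proof
      assume h: "[m*int i = y] (mod int d)"
      have "[u*(m*int i) = u*y] (mod int d)" using h by (simp add: cong_scalar_left)
      moreover have "[u*(m*int i) = int i] (mod int d)"
        using cong_scalar_right[OF u, of "int i"] by (simp add: ac_simps)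
      ultimately show "[int i = u*y] (mod int d)" by (meson cong_sym cong_trans)
    next
      assume h: "[int i = u*y] (mod int d)"
      have "[m*int i = m*(u*y)] (mod int d)" using h by (simp add: cong_scalar_left)
      moreover have "[m*(u*y) = y] (mod int d)"
        using cong_scalar_right[OF u, of y] by (simp add: ac_simps)
      ultimately show "[m*int i = y] (mod int d)" by (meson cong_trans)
    qed
    also have "\<dots> \<longleftrightarrow> int i mod int d = int i0" using i0 by (simp add: cong_def)
    also have "\<dots> \<longleftrightarrow> i mod d = i0" by (metis of_nat_eq_iff of_nat_mod)
    finally show ?thesis .
  qed
  have "{i. i < lam*d \<and> (c + 7*m*int i) mod (7*int d) = x} = {i. i < lam*d \<and> i mod d = i0}"
    using key by blast
  thus ?thesis using True card_mod_class[OF i0(1)] by simp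
qed

definition ent :: "nat \<Rightarrow> nat \<Rightarrow> int" where
  "ent i k = (if k = 0 then 1 + 7*int i else if k = 1 then 2 - 14*int i else 7*int i - 3)"

definition arr :: "nat \<Rightarrow> nat \<Rightarrow> nat \<Rightarrow> nat \<Rightarrow> int option" where
  "arr n d i j = (if i < n \<and> (\<exists>k<3. j = (i+k) mod n)
     then Some (ent i (SOME k. k < 3 \<and> j = (i+k) mod n) mod (7*int d)) else None)"

lemma dist1:
  fixes n i k k' :: nat
  assumes "k < n" "k' < n" "(i+k) mod n = (i+k') mod n"
  shows "k = k'"
proof -
  have "[i+k = i+k'] (mod n)" using assms(3) by (simp add: cong_def)
  hence "[k = k'] (mod n)" by (simp add: cong_add_lcancel_nat)
  thus ?thesis using assms(1,2) by (simp add: cong_def)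
qed

lemma dist2:
  fixes n i i' k :: nat
  assumes "i < n" "i' < n" "(i+k) mod n = (i'+k) mod n"
  shows "i = i'"
  using dist1[of i n i' k] assms by (simp add: add.commute)

lemma arr_eq:
  assumes "3 \<le> (n::nat)" "i < n" "k < 3"
  shows "arr n d i ((i+k) mod n) = Some (ent i k mod (7*int d))"
proof -
  have ex: "\<exists>k'<3. (i+k) mod n = (i+k') mod n" using assms by blast
  have "(SOME k'. k' < 3 \<and> (i+k) mod n = (i+k') mod n) = k"
  proof (rule some_equality)
    show "k < 3 \<and> (i+k) mod n = (i+k) mod n" using assms by simp
  next
    fix k' assume "k' < 3 \<and> (i+k) mod n = (i+k') mod n"
    thus "k' = k" using dist1[of k' n k i] assms by auto
  qed
  thus ?thesis using ex assms unfolding arr_def by simp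
qed

lemma arr_None:
  "arr n d i j \<noteq> None \<longleftrightarrow> i < n \<and> (\<exists>k<3. j = (i+k) mod n)"
  unfolding arr_def by simp

lemma arr_SomeD:
  "arr n d i j = Some y \<Longrightarrow> i < n \<and> (\<exists>k<3. j = (i+k) mod n)"
  using arr_None[of n d i j] by simp

lemma rows_set:
  assumes "3 \<le> (n::nat)" "i < n"
  shows "{j. j < n \<and> arr n d i j \<noteq> None} = (\<lambda>k. (i+k) mod n) ` {..<3}"
  using assms by (auto simp: arr_eq dest!: arr_SomeD)

lemma rows_inj:
  assumes "3 \<le> (n::nat)"
  shows "inj_on (\<lambda>k. (i+k) mod n) {..<3}"
proof (rule inj_onI)
  fix k k' :: nat assume "k \<in> {..<3}" "k' \<in> {..<3}" "(i+k) mod n = (i+k') mod n"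
  thus "k = k'" using dist1[of k n k' i] assms by simp
qed

lemma col_back:
  assumes "3 \<le> (n::nat)" "j < n" "k < 3"
  shows "((j+n-k) mod n + k) mod n = j"
proof -
  have "((j+n-k) mod n + k) mod n = ((j+n-k) + k) mod n" by (rule mod_add_left_eq)
  also have "(j+n-k) + k = j + n" using assms by simp
  finally show ?thesis using assms by simp
qed

lemma cols_set:
  assumes "3 \<le> (n::nat)" "j < n"
  shows "{i. i < n \<and> arr n d i j \<noteq> None} = (\<lambda>k. (j+n-k) mod n) ` {..<3}"
proof (intro set_eqI iffI)
  fix i assume "i \<in> {i. i < n \<and> arr n d i j \<noteq> None}"
  hence "i < n" "arr n d i j \<noteq> None" by auto
  then obtain k where k: "i < n" "k < 3" "j = (i+k) mod n" using arr_None by blast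
  have e: "((j+n-k) mod n + k) mod n = j" by (rule col_back[OF assms k(2)])
  have "(j+n-k) mod n = i"
  proof (rule dist2[of _ n _ k])
    show "(j+n-k) mod n < n" using assms by simp
    show "i < n" by (rule k(1))
    show "((j+n-k) mod n + k) mod n = (i + k) mod n" using e k(3) by simp
  qed
  thus "i \<in> (\<lambda>k. (j+n-k) mod n) ` {..<3}" using k(2) by blast
next
  fix i assume "i \<in> (\<lambda>k. (j+n-k) mod n) ` {..<3}"
  then obtain k where k: "k < 3" "i = (j+n-k) mod n" by blast
  have "i < n" using k assms by simp
  moreover have "j = (i + k) mod n" using col_back[OF assms k(1)] k(2) by simp
  ultimately have "arr n d i j = Some (ent i k mod (7*int d))" using arr_eq[OF assms(1) _ k(1)] by simp
  thus "i \<in> {i. i < n \<and> arr n d i j \<noteq> None}" using \<open>i < n\<close> by simp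
qed

lemma cols_inj:
  assumes "3 \<le> (n::nat)" "j < n"
  shows "inj_on (\<lambda>k. (j+n-k) mod n) {..<3}"
proof (rule inj_onI)
  fix k k' :: nat assume h: "k \<in> {..<3}" "k' \<in> {..<3}" "(j+n-k) mod n = (j+n-k') mod n"
  have k3: "k < 3" "k' < 3" using h(1,2) by auto
  have e1: "((j+n-k) mod n + k) mod n = j" by (rule col_back[OF assms k3(1)])
  have e2: "((j+n-k') mod n + k') mod n = j" by (rule col_back[OF assms k3(2)])
  have e3: "((j+n-k) mod n + k') mod n = j" using e2 h(3) by simp
  show "k = k'"
  proof (rule dist1[of k n k' "(j+n-k) mod n"])
    show "k < n" "k' < n" using k3 assms by auto
    show "((j+n-k) mod n + k) mod n = ((j+n-k) mod n + k') mod n" using e1 e3 by simp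
  qed
qed

lemma filled_eq:
  assumes "3 \<le> (n::nat)"
  shows "filled_cells n n (arr n d) = (\<lambda>(i,k). (i, (i+k) mod n)) ` ({..<n} \<times> {..<3})"
proof (intro set_eqI iffI)
  fix p assume "p \<in> filled_cells n n (arr n d)"
  then obtain i j where p: "p = (i,j)" "i < n" "j < n" "arr n d i j \<noteq> None" unfolding filled_cells_def by auto
  then obtain k where k: "k < 3" "j = (i+k) mod n" using arr_None by blast
  show "p \<in> (\<lambda>(i,k). (i, (i+k) mod n)) ` ({..<n} \<times> {..<3})"
    by (rule rev_image_eqI[of "(i,k)"]) (use p k in simp_all)
next
  fix p assume "p \<in> (\<lambda>(i,k). (i, (i+k) mod n)) ` ({..<n} \<times> {..<3})"
  then obtain i k where p: "p = (i, (i+k) mod n)" "i < n" "k < 3" by auto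
  show "p \<in> filled_cells n n (arr n d)" unfolding filled_cells_def
    using p assms arr_eq[OF assms p(2,3), of d] by auto
qed

lemma filled_inj:
  assumes "3 \<le> (n::nat)"
  shows "inj_on (\<lambda>(i,k). (i, (i+k) mod n)) ({..<n} \<times> {..<3})"
proof (rule inj_onI)
  fix p q assume h: "p \<in> {..<n} \<times> {..<3::nat}" "q \<in> {..<n} \<times> {..<3::nat}"
    "(\<lambda>(i,k). (i, (i+k) mod n)) p = (\<lambda>(i,k). (i, (i+k) mod n)) q"
  obtain i k i' k' where pq: "p = (i,k)" "q = (i',k')" by force
  have "i = i'" "(i+k) mod n = (i+k') mod n" using h(3) pq by auto
  moreover have "k < 3" "k' < 3" using h pq by auto
  ultimately show "p = q" using dist1[of k n k' i] assms pq by simp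
qed

lemma count_mset_set_image:
  assumes "finite S"
  shows "count (image_mset f (mset_set S)) x = card {p \<in> S. f p = x}"
proof -
  have "count (image_mset f (mset_set S)) x = (\<Sum>y\<in>f -` {x} \<inter> S. 1)"
    using assms by (simp add: count_image_mset)
  also have "\<dots> = card (f -` {x} \<inter> S)" by simp
  also have "f -` {x} \<inter> S = {p \<in> S. f p = x}" by auto
  finally show ?thesis .
qed

lemma card_prod3:
  "card {p \<in> {..<n::nat} \<times> {..<3::nat}. f p = x} = (\<Sum>k<3. card {i. i < n \<and> f (i,k) = x})"
proof -
  have eq: "{p \<in> {..<n} \<times> {..<3::nat}. f p = x} = (\<Union>k<3. (\<lambda>i. (i,k)) ` {i. i < n \<and> f (i,k) = x})"
    by blast
  have fin: "finite ((\<lambda>i. (i,k)) ` {i. i < n \<and> f (i,k) = x})" for k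
    by (rule finite_imageI, rule finite_subset[of _ "{..<n}"]) auto
  have "card (\<Union>k<3. (\<lambda>i. (i,k)) ` {i. i < n \<and> f (i,k) = x})
      = (\<Sum>k<3. card ((\<lambda>i. (i,k)) ` {i. i < n \<and> f (i,k) = x}))"
    by (rule card_UN_disjoint) (auto simp: fin)
  also have "\<dots> = (\<Sum>k<3. card {i. i < n \<and> f (i,k) = x})"
    by (intro sum.cong refl card_image) (auto simp: inj_on_def)
  finally show ?thesis using eq by simp
qed

lemma cnt:
  fixes d lam :: nat and c m x :: int and e :: "nat \<Rightarrow> int"
  assumes "\<And>i. e i = c + 7*m*int i" "d > 0" "coprime m (int d)" "0 \<le> x" "x < 7*int d"
  shows "card {i. i < lam*d \<and> e i mod (7*int d) = x} = (if x mod 7 = c mod 7 then lam else 0)"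
  using count_aff[OF assms(2-5), of lam c] assms(1) by simp

lemma mset_eq:
  assumes "3 \<le> (n::nat)"
  shows "pm_multiset V n n (arr n d) =
    image_mset (\<lambda>(i,k). ent i k mod (7*int d) mod V) (mset_set ({..<n} \<times> {..<3})) +
    image_mset (\<lambda>(i,k). (- (ent i k mod (7*int d))) mod V) (mset_set ({..<n} \<times> {..<3}))"
proof -
  let ?g = "\<lambda>(i,k). (i, (i+k) mod n)"
  let ?D = "{..<n} \<times> {..<3::nat}"
  have fc: "mset_set (filled_cells n n (arr n d)) = image_mset ?g (mset_set ?D)"
    unfolding filled_eq[OF assms] by (rule image_mset_mset_set[OF filled_inj[OF assms], symmetric])
  have "image_mset (\<lambda>(i, j). the (arr n d i j) mod V) (image_mset ?g (mset_set ?D))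
      = image_mset (\<lambda>(i,k). ent i k mod (7*int d) mod V) (mset_set ?D)"
    unfolding image_mset.compositionality
    by (rule image_mset_cong) (use assms in \<open>auto simp: arr_eq\<close>)
  moreover have "image_mset (\<lambda>(i, j). (- the (arr n d i j)) mod V) (image_mset ?g (mset_set ?D))
      = image_mset (\<lambda>(i,k). (- (ent i k mod (7*int d))) mod V) (mset_set ?D)"
    unfolding image_mset.compositionality
    by (rule image_mset_cong) (use assms in \<open>auto simp: arr_eq\<close>)
  ultimately show ?thesis unfolding pm_multiset_def fc by simp
qed

theorem proposition4:
  fixes n lam :: nat
  assumes "odd n" and "n \<ge> 3" and "0 < lam" and "lam dvd n"
  shows "\<exists>A. heffter_array lam (n div lam) n n 3 3 A"
proof -
  obtain d where nd: "n = lam * d" using assms(4) by (auto simp: dvd_def)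
  have dpos: "d > 0" using nd assms(2) by (cases d) auto
  have dodd: "odd d" using nd assms(1) by simp
  have h6: "2 * n * 3 div lam = 6 * d" using nd assms(3) by simp
  have hd: "n div lam = d" using nd assms(3) by simp
  have V: "int (6 * d + d) = 7 * int d" by simp
  have v7: "(6 * d + d) div d = 7" using dpos by simp
  have n3: "3 \<le> n" by (rule assms(2))
  let ?V = "7 * int d"
  have rows: "\<forall>i<n. card {j. j < n \<and> arr n d i j \<noteq> None} = 3"
    using rows_set[OF n3] rows_inj[OF n3] by (simp add: card_image)
  have cols: "\<forall>j<n. card {i. i < n \<and> arr n d i j \<noteq> None} = 3"
    using cols_set[OF n3] cols_inj[OF n3] by (simp add: card_image)
  have range: "\<forall>i j. arr n d i j \<noteq> None \<longrightarrow> i < n \<and> j < n"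
  proof (intro allI impI)
    fix i j assume "arr n d i j \<noteq> None"
    then obtain k where "i < n" "k < 3" "j = (i+k) mod n" using arr_None by blast
    thus "i < n \<and> j < n" using n3 by simp
  qed
  have vals: "\<forall>i j x. arr n d i j = Some x \<longrightarrow> 0 \<le> x \<and> x < int (6*d+d)"
    using dpos by (auto simp: arr_def split: if_splits)
  have rowsum: "\<forall>i<n. (\<Sum>j \<in> {j. j < n \<and> arr n d i j \<noteq> None}. the (arr n d i j)) mod int (6*d+d) = 0"
  proof (intro allI impI)
    fix i assume i: "i < n"
    have "(\<Sum>j \<in> {j. j < n \<and> arr n d i j \<noteq> None}. the (arr n d i j))
        = (\<Sum>k<3. the (arr n d i ((i+k) mod n)))"
      unfolding rows_set[OF n3 i] by (rule sum.reindex_cong[OF rows_inj[OF n3]]) auto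
    also have "\<dots> = (\<Sum>k<3. ent i k mod ?V)"
      by (rule sum.cong) (use n3 i in \<open>auto simp: arr_eq\<close>)
    finally have "(\<Sum>j \<in> {j. j < n \<and> arr n d i j \<noteq> None}. the (arr n d i j)) mod ?V
        = (\<Sum>k<3. ent i k) mod ?V" by (simp add: mod_sum_eq)
    also have "(\<Sum>k<3. ent i k) = 0" by (simp add: ent_def eval_nat_numeral)
    finally show "(\<Sum>j \<in> {j. j < n \<and> arr n d i j \<noteq> None}. the (arr n d i j)) mod int (6*d+d) = 0"
      by (simp only: V) simp
  qed
  have colsum: "\<forall>j<n. (\<Sum>i \<in> {i. i < n \<and> arr n d i j \<noteq> None}. the (arr n d i j)) mod int (6*d+d) = 0"
  proof (intro allI impI)
    fix j assume j: "j < n"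
    let ?r = "\<lambda>k. (j+n-k) mod n"
    have "(\<Sum>i \<in> {i. i < n \<and> arr n d i j \<noteq> None}. the (arr n d i j))
        = (\<Sum>k<3. the (arr n d (?r k) j))"
      unfolding cols_set[OF n3 j] by (rule sum.reindex_cong[OF cols_inj[OF n3 j]]) auto
    also have "\<dots> = (\<Sum>k<3. ent (?r k) k mod ?V)"
    proof (rule sum.cong)
      fix k assume "k \<in> {..<3::nat}"
      hence k: "k < 3" by simp
      have "arr n d (?r k) j = arr n d (?r k) ((?r k + k) mod n)" using col_back[OF n3 j k] by simp
      also have "\<dots> = Some (ent (?r k) k mod ?V)" by (rule arr_eq[OF n3 _ k]) (use n3 in simp)
      finally show "the (arr n d (?r k) j) = ent (?r k) k mod ?V" by simp
    qed simp
    finally have s1: "(\<Sum>i \<in> {i. i < n \<and> arr n d i j \<noteq> None}. the (arr n d i j)) mod ?V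
        = (\<Sum>k<3. ent (?r k) k) mod ?V" by (simp add: mod_sum_eq)
    have rk: "int (?r k) = int j + int n - int k - int n * int ((j+n-k) div n)" if "k < 3" for k
    proof -
      have "j + n - k = n * ((j+n-k) div n) + ?r k" by simp
      hence "int (j + n - k) = int n * int ((j+n-k) div n) + int (?r k)" by (metis of_nat_add of_nat_mult)
      moreover have "int (j + n - k) = int j + int n - int k" using that n3 by simp
      ultimately show ?thesis by simp
    qed
    have "(\<Sum>k<3. ent (?r k) k) = ent (?r 0) 0 + ent (?r 1) 1 + ent (?r 2) 2"
      by (simp add: eval_nat_numeral)
    also have "\<dots> = 7 * (int (?r 0) - 2 * int (?r 1) + int (?r 2))" by (simp add: ent_def)
    also have "\<dots> = ?V * (- int lam * (int ((j+n-0) div n) - 2 * int ((j+n-1) div n) + int ((j+n-2) div n)))"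
      using rk[of 0] rk[of 1] rk[of 2] nd by (simp add: algebra_simps)
    finally have "(\<Sum>k<3. ent (?r k) k) mod ?V = 0" by simp
    with s1 show "(\<Sum>i \<in> {i. i < n \<and> arr n d i j \<noteq> None}. the (arr n d i j)) mod int (6*d+d) = 0"
      by (simp only: V)
  qed
  have counts: "\<forall>x \<in> {0..<int (6*d+d)}. count (pm_multiset (int (6*d+d)) n n (arr n d)) x =
            (if int ((6*d+d) div d) dvd x then 0 else lam)"
  proof
    fix x assume "x \<in> {0..<int (6*d+d)}"
    hence x: "0 \<le> x" "x < ?V" by auto
    let ?D = "{..<n} \<times> {..<3::nat}"
    have fin: "finite ?D" by simp
    have "count (pm_multiset (int (6*d+d)) n n (arr n d)) x
       = card {p \<in> ?D. (\<lambda>(i,k). ent i k mod ?V mod ?V) p = x}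
       + card {p \<in> ?D. (\<lambda>(i,k). (- (ent i k mod ?V)) mod ?V) p = x}"
      unfolding V mset_eq[OF n3] by (simp only: count_union count_mset_set_image[OF fin])
    also have "\<dots> = (\<Sum>k<3. card {i. i < n \<and> ent i k mod ?V = x})
                  + (\<Sum>k<3. card {i. i < n \<and> (- ent i k) mod ?V = x})"
      by (simp only: card_prod3) (simp add: mod_minus_eq)
    also have "\<dots> = card {i. i < lam*d \<and> ent i 0 mod ?V = x} + card {i. i < lam*d \<and> ent i 1 mod ?V = x}
       + card {i. i < lam*d \<and> ent i 2 mod ?V = x} + card {i. i < lam*d \<and> (- ent i 0) mod ?V = x}
       + card {i. i < lam*d \<and> (- ent i 1) mod ?V = x} + card {i. i < lam*d \<and> (- ent i 2) mod ?V = x}"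
      by (simp add: eval_nat_numeral nd)
    also have "\<dots> = (if x mod 7 = 1 then lam else 0) + (if x mod 7 = 2 then lam else 0)
       + (if x mod 7 = 4 then lam else 0) + (if x mod 7 = 6 then lam else 0)
       + (if x mod 7 = 5 then lam else 0) + (if x mod 7 = 3 then lam else 0)"
    proof -
      have c2: "coprime (2::int) (int d)" "coprime (-2::int) (int d)" using dodd by auto
      have "card {i. i < lam*d \<and> ent i 0 mod ?V = x} = (if x mod 7 = 1 mod 7 then lam else 0)"
        by (rule cnt[of _ 1 1]) (use dpos x in \<open>auto simp: ent_def\<close>)
      moreover have "card {i. i < lam*d \<and> ent i 1 mod ?V = x} = (if x mod 7 = 2 mod 7 then lam else 0)"
        by (rule cnt[of _ 2 "-2"]) (use dpos x c2 in \<open>auto simp: ent_def\<close>)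
      moreover have "card {i. i < lam*d \<and> ent i 2 mod ?V = x} = (if x mod 7 = (-3) mod 7 then lam else 0)"
        by (rule cnt[of _ "-3" 1]) (use dpos x in \<open>auto simp: ent_def\<close>)
      moreover have "card {i. i < lam*d \<and> (- ent i 0) mod ?V = x} = (if x mod 7 = (-1) mod 7 then lam else 0)"
        by (rule cnt[of _ "-1" "-1"]) (use dpos x in \<open>auto simp: ent_def\<close>)
      moreover have "card {i. i < lam*d \<and> (- ent i 1) mod ?V = x} = (if x mod 7 = (-2) mod 7 then lam else 0)"
        by (rule cnt[of _ "-2" 2]) (use dpos x c2 in \<open>auto simp: ent_def\<close>)
      moreover have "card {i. i < lam*d \<and> (- ent i 2) mod ?V = x} = (if x mod 7 = 3 mod 7 then lam else 0)"
        by (rule cnt[of _ 3 "-1"]) (use dpos x in \<open>auto simp: ent_def\<close>)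
      ultimately show ?thesis by simp
    qed
    also have "\<dots> = (if int ((6*d+d) div d) dvd x then 0 else lam)"
    proof -
      have r: "x mod 7 \<in> {0,1,2,3,4,5,6}" by auto
      have "7 dvd x \<longleftrightarrow> x mod 7 = 0" by auto
      thus ?thesis using r unfolding v7 by auto
    qed
    finally show "count (pm_multiset (int (6*d+d)) n n (arr n d)) x =
            (if int ((6*d+d) div d) dvd x then 0 else lam)" .
  qed
  have "heffter_array lam (n div lam) n n 3 3 (arr n d)"
    unfolding heffter_array_def Let_def h6 hd
    using assms(3) dpos nd rows cols range vals rowsum colsum counts
    by (simp add: dvd_def)
  thus ?thesis by blast
qed

end
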